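(* Let $\tau>0$ and let $u_\tau$ be a continuous periodic solution of the discrete Lax--Oleinik equation with constant $\bar L(\tau)$. For every $(x,v)\in\widetilde{\mathcal A}^{\tau}_L$ there exists a bi-infinite sequence $\{x_k\}_{k\in\mathbb{Z}}$ such that $x_0=x$, $x_1=x+\tau v$, and for all integers $m<n$, \[ u_\tau(x_n)-u_\tau(x_m)=\sum_{j=m}^{n-1}\mathcal L_\tau(x_j,x_{j+1})-(n-m)\tau\bar L(\tau). \]
   Context: $\mathbb{T}^d=\mathbb{R}^d/\mathbb{Z}^d$; functions on $\mathbb{T}^d$ are identified with $\mathbb{Z}^d$-periodic functions on $\mathbb{R}^d$. $H$ is a Tonelli Hamiltonian on $\mathbb{T}^d\times\mathbb{R}^d$ ($C^2$, $D^2_{pp}H>0$, superlinear in $p$ uniformly in $x$) and $L(x,v)=\sup_p\{p\cdot v-H(x,p)\}$ its Legendre transform. For $\tau>0$, $\mathcal L_\tau(x,y):=\tau L(x,\frac{y-x}{\tau})$. The discrete Lax--Oleinik equation is $u_\tau(y)+\bar L(\tau)\tau=\inf_{x\in\mathbb{R}^d}(u_\tau(x)+\mathcal L_\tau(x,y))$ for all $y$; it is known that there is a unique constant $\bar L(\tau)$ for which a continuous periodic solution $u_\tau$ exists, and such solutions are Lipschitz. A calibrated configuration for $u_\tau(x)$ is a sequence $\{x_{-k}\}_{k\ge0}$ with $x_0=x$ and $u_\tau(x_{-k})+\tau\bar L(\tau)=u_\tau(x_{-k-1})+\mathcal L_\tau(x_{-k-1},x_{-k})$ for all $k\ge0$.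 Define $\widetilde\Sigma^\tau_L:=\{(x,v)\in\mathbb{T}^d\times\mathbb{R}^d:$ there is a calibrated configuration $\{x_{-k}\}_{k\ge0}$ for $u_\tau(x+\tau v)$ with $x_{-1}=x$, $(x_0-x_{-1})/\tau=v\}$. For $n\in\mathbb{N}$ and $(x,v)$, let $\Psi^n_{L,\tau}(x,v)$ be the set of points $\bigl(x_{-n-1},\frac{x_{-n}-x_{-n-1}}{\tau}\bigr)$ over all calibrated configurations $\{x_{-k}\}_{k\ge0}$ for $u_\tau(x+\tau v)$ with $x_{-1}=x$ and $v=(x_0-x_{-1})/\tau$; for a set $S$, $\Psi^n_{L,\tau}(S)$ is the union of $\Psi^n_{L,\tau}(z)$ over $z\in S$. The discrete Aubry set is $\widetilde{\mathcal A}^\tau_L:=\bigcap_{n\in\mathbb{N}}\Psi^n_{L,\tau}(\widetilde\Sigma^\tau_L)$. *)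

theory Defs
  imports "HOL-Analysis.Analysis"
begin

text \<open>Points of the torus are represented by points of real^'d (Z^d-periodic lifts).\<close>

definition int_shift :: "int ^ 'd \<Rightarrow> real ^ 'd" where
  "int_shift k = (\<chi> i. real_of_int (k $ i))"

definition zd_periodic :: "(real ^ 'd \<Rightarrow> 'b) \<Rightarrow> bool" where
  "zd_periodic u \<longleftrightarrow> (\<forall>x k. u (x + int_shift k) = u x)"

definition tonelli :: "((real ^ 'd) \<times> (real ^ 'd) \<Rightarrow> real) \<Rightarrow> bool" where
  "tonelli H \<longleftrightarrow>
     (\<exists>DH DDH.
        (\<forall>z. (H has_derivative blinfun_apply (DH z)) (at z)) \<and>
        (\<forall>z. (DH has_derivative blinfun_apply (DDH z)) (at z)) \<and>
        continuous_on UNIV DDH \<and>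
        (\<forall>x p w. w \<noteq> 0 \<longrightarrow>
            blinfun_apply (blinfun_apply (DDH (x, p)) (0, w)) (0, w) > 0)) \<and>
     (\<forall>x p k. H (x + int_shift k, p) = H (x, p)) \<and>
     (\<forall>A. \<exists>B. \<forall>x p. H (x, p) \<ge> A * norm p - B)"

definition lagrangian :: "((real ^ 'd) \<times> (real ^ 'd) \<Rightarrow> real) \<Rightarrow> real ^ 'd \<Rightarrow> real ^ 'd \<Rightarrow> real" where
  "lagrangian H x v = (SUP p. inner p v - H (x, p))"

definition Ltau :: "(real ^ 'd \<Rightarrow> real ^ 'd \<Rightarrow> real) \<Rightarrow> real \<Rightarrow> real ^ 'd \<Rightarrow> real ^ 'd \<Rightarrow> real" where
  "Ltau L \<tau> x y = \<tau> * L x ((1 / \<tau>) *\<^sub>R (y - x))"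

text \<open>u solves the discrete Lax--Oleinik equation with constant c (= Lbar(tau)).\<close>

definition discrete_LO_solution ::
  "(real ^ 'd \<Rightarrow> real ^ 'd \<Rightarrow> real) \<Rightarrow> real \<Rightarrow> real \<Rightarrow> (real ^ 'd \<Rightarrow> real) \<Rightarrow> bool" where
  "discrete_LO_solution L \<tau> c u \<longleftrightarrow>
     (\<forall>y. u y + c * \<tau> = (INF x. u x + Ltau L \<tau> x y))"

text \<open>Calibrated configuration for u(x): xs k stands for x_{-k}.\<close>

definition calibrated ::
  "(real ^ 'd \<Rightarrow> real ^ 'd \<Rightarrow> real) \<Rightarrow> real \<Rightarrow> real \<Rightarrow> (real ^ 'd \<Rightarrow> real)
     \<Rightarrow> real ^ 'd \<Rightarrow> (nat \<Rightarrow> real ^ 'd) \<Rightarrow> bool" where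
  "calibrated L \<tau> c u x xs \<longleftrightarrow> xs 0 = x \<and>
     (\<forall>k. u (xs k) + \<tau> * c = u (xs (Suc k)) + Ltau L \<tau> (xs (Suc k)) (xs k))"

definition Sigma_tau ::
  "(real ^ 'd \<Rightarrow> real ^ 'd \<Rightarrow> real) \<Rightarrow> real \<Rightarrow> real \<Rightarrow> (real ^ 'd \<Rightarrow> real)
     \<Rightarrow> ((real ^ 'd) \<times> (real ^ 'd)) set" where
  "Sigma_tau L \<tau> c u = {(x, v). \<exists>xs. calibrated L \<tau> c u (x + \<tau> *\<^sub>R v) xs \<and> xs 1 = x
       \<and> (1 / \<tau>) *\<^sub>R (xs 0 - xs 1) = v}"

definition Psi_tau ::
  "(real ^ 'd \<Rightarrow> real ^ 'd \<Rightarrow> real) \<Rightarrow> real \<Rightarrow> real \<Rightarrow> (real ^ 'd \<Rightarrow> real) \<Rightarrow> nat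
     \<Rightarrow> (real ^ 'd) \<times> (real ^ 'd) \<Rightarrow> ((real ^ 'd) \<times> (real ^ 'd)) set" where
  "Psi_tau L \<tau> c u n z = {(xs (Suc n), (1 / \<tau>) *\<^sub>R (xs n - xs (Suc n))) | xs.
       calibrated L \<tau> c u (fst z + \<tau> *\<^sub>R snd z) xs \<and> xs 1 = fst z
       \<and> snd z = (1 / \<tau>) *\<^sub>R (xs 0 - xs 1)}"

definition Psi_tau_set ::
  "(real ^ 'd \<Rightarrow> real ^ 'd \<Rightarrow> real) \<Rightarrow> real \<Rightarrow> real \<Rightarrow> (real ^ 'd \<Rightarrow> real) \<Rightarrow> nat
     \<Rightarrow> ((real ^ 'd) \<times> (real ^ 'd)) set \<Rightarrow> ((real ^ 'd) \<times> (real ^ 'd)) set" where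
  "Psi_tau_set L \<tau> c u n S = (\<Union>z\<in>S. Psi_tau L \<tau> c u n z)"

definition discrete_Aubry ::
  "(real ^ 'd \<Rightarrow> real ^ 'd \<Rightarrow> real) \<Rightarrow> real \<Rightarrow> real \<Rightarrow> (real ^ 'd \<Rightarrow> real)
     \<Rightarrow> ((real ^ 'd) \<times> (real ^ 'd)) set" where
  "discrete_Aubry L \<tau> c u = (\<Inter>n. Psi_tau_set L \<tau> c u n (Sigma_tau L \<tau> c u))"

end

theory Submission
  imports Defs
begin

lemma shift_into_box:
  fixes y :: "real ^ 'd"
  shows "\<exists>k. y + int_shift k \<in> cbox (vec 0) (vec 1)"
proof -
  define k where "k = (\<chi> i. - \<lfloor>y $ i\<rfloor>)"
  have "y + int_shift k \<in> cbox (vec 0) (vec 1)"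
    unfolding mem_box_cart int_shift_def k_def
    by (auto simp: vec_nth_inverse) linarith
  then show ?thesis by blast
qed

lemma periodic_bounded:
  fixes u :: "real ^ 'd \<Rightarrow> real"
  assumes "continuous_on UNIV u" "zd_periodic u"
  shows "\<exists>M\<ge>0. \<forall>y. \<bar>u y\<bar> \<le> M"
proof -
  have "compact (u ` cbox (vec 0) (vec 1))"
    by (rule compact_continuous_image) (auto intro: continuous_on_subset[OF assms(1)])
  then obtain M where M: "M > 0" "\<And>z. z \<in> u ` cbox (vec 0) (vec 1) \<Longrightarrow> norm z \<le> M"
    using compact_imp_bounded bounded_pos by metis
  have "\<bar>u y\<bar> \<le> M" for y
  proof -
    obtain k where "y + int_shift k \<in> cbox (vec 0) (vec 1)" using shift_into_box by blast
    then have "\<bar>u (y + int_shift k)\<bar> \<le> M" using M by auto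
    then show ?thesis using assms(2) unfolding zd_periodic_def by metis
  qed
  then show ?thesis using M by (auto intro: less_imp_le)
qed

lemma H_bounded:
  fixes H :: "(real ^ 'd) \<times> (real ^ 'd) \<Rightarrow> real"
  assumes "tonelli H"
  shows "\<exists>M\<ge>0. \<forall>y p. norm p \<le> 1 \<longrightarrow> \<bar>H (y, p)\<bar> \<le> M"
proof -
  obtain DH where "\<forall>z. (H has_derivative blinfun_apply (DH z)) (at z)"
    using assms unfolding tonelli_def by blast
  then have cont: "continuous_on UNIV H"
    by (meson continuous_at_imp_continuous_on has_derivative_continuous)
  have per: "\<And>x p k. H (x + int_shift k, p) = H (x, p)" using assms unfolding tonelli_def by blast
  have "compact (H ` (cbox (vec 0) (vec 1) \<times> cball 0 1))"
    by (rule compact_continuous_image) (auto intro: continuous_on_subset[OF cont] compact_Times)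
  then obtain M where M: "M > 0" "\<And>z. z \<in> H ` (cbox (vec 0) (vec 1) \<times> cball 0 1) \<Longrightarrow> norm z \<le> M"
    using compact_imp_bounded bounded_pos by metis
  have "\<bar>H (y, p)\<bar> \<le> M" if "norm p \<le> 1" for y p
  proof -
    obtain k where "y + int_shift k \<in> cbox (vec 0) (vec 1)" using shift_into_box by blast
    then have "\<bar>H (y + int_shift k, p)\<bar> \<le> M" using M that by auto
    then show ?thesis using per by metis
  qed
  then show ?thesis using M by (auto intro: less_imp_le)
qed

lemma H_cont:
  assumes "tonelli H"
  shows "continuous_on UNIV H"
proof -
  obtain DH where "\<forall>z. (H has_derivative blinfun_apply (DH z)) (at z)"
    using assms unfolding tonelli_def by blast
  then show ?thesis
    by (meson continuous_at_imp_continuous_on has_derivative_continuous)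
qed

lemma lag_bdd:
  assumes "tonelli H"
  shows "bdd_above (range (\<lambda>p. inner p v - H (y, p)))"
proof -
  obtain B where B: "\<And>x p. H (x, p) \<ge> (norm v + 1) * norm p - B"
    using assms unfolding tonelli_def by blast
  have "inner p v - H (y, p) \<le> B" for p
  proof -
    have "inner p v \<le> norm p * norm v" using norm_cauchy_schwarz by blast
    moreover have "H (y, p) \<ge> (norm v + 1) * norm p - B" using B by blast
    moreover have "(norm v + 1) * norm p = norm p * norm v + norm p" by (simp add: algebra_simps)
    ultimately show ?thesis using norm_ge_zero[of p] by linarith
  qed
  then show ?thesis by (intro bdd_aboveI[where M=B]) auto
qed

lemma lag_upper:
  assumes "tonelli H"
  shows "inner p v - H (y, p) \<le> lagrangian H y v"
  unfolding lagrangian_def by (rule cSUP_upper[OF UNIV_I lag_bdd[OF assms]])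

lemma lag_lower:
  fixes H :: "(real ^ 'd) \<times> (real ^ 'd) \<Rightarrow> real"
  assumes "tonelli H" "\<forall>y p. norm p \<le> 1 \<longrightarrow> \<bar>H (y, p)\<bar> \<le> M"
  shows "norm v - M \<le> lagrangian H y v"
proof (cases "v = 0")
  case True
  have "inner 0 v - H (y, 0) \<le> lagrangian H y v" by (rule lag_upper[OF assms(1)])
  moreover have "\<bar>H (y, 0)\<bar> \<le> M" using assms(2) by simp
  ultimately show ?thesis using True by simp
next
  case False
  define p where "p = (1 / norm v) *\<^sub>R v"
  have np: "norm p = 1" using False by (simp add: p_def)
  have "inner p v = norm v" using False
    by (simp add: p_def power2_norm_eq_inner[symmetric] power2_eq_square)
  moreover have "inner p v - H (y, p) \<le> lagrangian H y v" by (rule lag_upper[OF assms(1)])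
  moreover have "\<bar>H (y, p)\<bar> \<le> M" using assms(2) np by simp
  ultimately show ?thesis by linarith
qed


lemma telescope:
  fixes X :: "int \<Rightarrow> 'a" and u :: "'a \<Rightarrow> real"
  assumes "\<And>k. u (X (k+1)) + \<tau> * c = u (X k) + F (X k) (X (k+1))"
  shows "m \<le> n \<Longrightarrow> u (X n) - u (X m) = (\<Sum>j\<in>{m..<n}. F (X j) (X (j + 1))) - real_of_int (n - m) * \<tau> * c"
proof (induction n rule: int_ge_induct)
  case base
  then show ?case by simp
next
  case (step i)
  have e: "{m..<i+1} = insert i {m..<i}" using step(1) by auto
  have "(\<Sum>j\<in>{m..<i+1}. F (X j) (X (j + 1))) = F (X i) (X (i + 1)) + (\<Sum>j\<in>{m..<i}. F (X j) (X (j + 1)))"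
    unfolding e by simp
  moreover have "real_of_int (i + 1 - m) = real_of_int (i - m) + 1" by simp
  ultimately show ?case using step(2) assms[of i] by (simp add: algebra_simps)
qed

theorem proposition3p5:
  fixes H :: "(real ^ 'd) \<times> (real ^ 'd) \<Rightarrow> real"
    and u :: "real ^ 'd \<Rightarrow> real"
    and \<tau> c :: real
    and x v :: "real ^ 'd"
  assumes "tonelli H"
    and "\<tau> > 0"
    and "continuous_on UNIV u"
    and "zd_periodic u"
    and "discrete_LO_solution (lagrangian H) \<tau> c u"
    and "(x, v) \<in> discrete_Aubry (lagrangian H) \<tau> c u"
  shows "\<exists>xs :: int \<Rightarrow> real ^ 'd. xs 0 = x \<and> xs 1 = x + \<tau> *\<^sub>R v \<and>
     (\<forall>m n. m < n \<longrightarrow>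
        u (xs n) - u (xs m) =
          (\<Sum>j\<in>{m..<n}. Ltau (lagrangian H) \<tau> (xs j) (xs (j + 1)))
          - real_of_int (n - m) * \<tau> * c)"
proof -
  let ?L = "lagrangian H"
  define S where "S = (\<lambda>y z. u z + \<tau> * c = u y + Ltau ?L \<tau> y z)"
  obtain Mu where Mu: "Mu \<ge> 0" "\<And>y. \<bar>u y\<bar> \<le> Mu" using periodic_bounded[OF assms(3,4)] by blast
  obtain M where M: "M \<ge> 0" "\<forall>y p. norm p \<le> 1 \<longrightarrow> \<bar>H (y, p)\<bar> \<le> M" using H_bounded[OF assms(1)] by blast
  have Llow: "norm w - M \<le> ?L y w" for y w using lag_lower[OF assms(1) M(2)] .
  have Ltlow: "norm (z - y) - \<tau> * M \<le> Ltau ?L \<tau> y z" for y z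
  proof -
    have "norm ((1 / \<tau>) *\<^sub>R (z - y)) - M \<le> ?L y ((1 / \<tau>) *\<^sub>R (z - y))" by (rule Llow)
    then have "\<tau> * (norm ((1 / \<tau>) *\<^sub>R (z - y)) - M) \<le> Ltau ?L \<tau> y z"
      unfolding Ltau_def using assms(2) by (simp add: mult_left_mono)
    moreover have "\<tau> * norm ((1 / \<tau>) *\<^sub>R (z - y)) = norm (z - y)" using assms(2) by simp
    ultimately show ?thesis by (simp add: algebra_simps)
  qed
  have LOineq: "u z + \<tau> * c \<le> u y + Ltau ?L \<tau> y z" for y z
  proof -
    have bdd: "bdd_below (range (\<lambda>y. u y + Ltau ?L \<tau> y z))"
    proof (intro bdd_belowI[where m="- Mu - \<tau> * M"])
      fix t assume "t \<in> range (\<lambda>y. u y + Ltau ?L \<tau> y z)"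
      then obtain y where "t = u y + Ltau ?L \<tau> y z" by blast
      moreover have "- Mu \<le> u y" using Mu(2)[of y] by linarith
      moreover have "- \<tau> * M \<le> Ltau ?L \<tau> y z" using Ltlow[of z y] norm_ge_zero[of "z - y"] by linarith
      ultimately show "- Mu - \<tau> * M \<le> t" by linarith
    qed
    have "u z + c * \<tau> = (INF y. u y + Ltau ?L \<tau> y z)"
      using assms(5) unfolding discrete_LO_solution_def by blast
    also have "\<dots> \<le> u y + Ltau ?L \<tau> y z" by (rule cINF_lower[OF bdd UNIV_I])
    finally show ?thesis by (simp add: mult.commute)
  qed
  define R where "R = 2 * Mu + \<tau> * \<bar>c\<bar> + \<tau> * M"
  have R0: "R \<ge> 0" unfolding R_def using Mu(1) M(1) assms(2) by simp
  have stepb: "dist y z \<le> R" if "S y z" for y z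
  proof -
    have "Ltau ?L \<tau> y z = u z - u y + \<tau> * c" using that unfolding S_def by linarith
    moreover have "u z - u y \<le> 2 * Mu" using Mu(2)[of y] Mu(2)[of z] by linarith
    moreover have "\<tau> * c \<le> \<tau> * \<bar>c\<bar>" using assms(2) by (simp add: mult_left_mono)
    ultimately show ?thesis using Ltlow[of z y] unfolding R_def by (simp add: dist_norm norm_minus_commute)
  qed
  have Hc: "continuous_on UNIV H" by (rule H_cont[OF assms(1)])
  have closedS: "S y z" if ly: "ys \<longlonglongrightarrow> y" and lz: "zs \<longlonglongrightarrow> z" and s: "\<And>n. S (ys n) (zs n)" for ys zs y z
  proof -
    define E where "E = u z - u y + \<tau> * c"
    have "?L y ((1 / \<tau>) *\<^sub>R (z - y)) \<le> E / \<tau>"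
      unfolding lagrangian_def
    proof (rule cSUP_least)
      fix p
      have le: "inner p ((1 / \<tau>) *\<^sub>R (zs n - ys n)) - H (ys n, p) \<le> (u (zs n) - u (ys n) + \<tau> * c) / \<tau>" for n
      proof -
        have "inner p ((1 / \<tau>) *\<^sub>R (zs n - ys n)) - H (ys n, p) \<le> ?L (ys n) ((1 / \<tau>) *\<^sub>R (zs n - ys n))"
          by (rule lag_upper[OF assms(1)])
        also have "\<dots> = (u (zs n) - u (ys n) + \<tau> * c) / \<tau>"
          using s[of n] assms(2) unfolding S_def Ltau_def by (simp add: field_simps)
        finally show ?thesis .
      qed
      have cH: "isCont H (y, p)" using Hc continuous_on_eq_continuous_at by blast
      have cu: "isCont u q" for q using assms(3) continuous_on_eq_continuous_at by blast
      have "(\<lambda>n. (ys n, p)) \<longlonglongrightarrow> (y, p)" by (intro tendsto_Pair ly tendsto_const)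
      then have h1: "(\<lambda>n. H (ys n, p)) \<longlonglongrightarrow> H (y, p)" by (rule isCont_tendsto_compose[OF cH])
      have "(\<lambda>n. (1 / \<tau>) *\<^sub>R (zs n - ys n)) \<longlonglongrightarrow> (1 / \<tau>) *\<^sub>R (z - y)"
        by (intro tendsto_scaleR tendsto_const tendsto_diff lz ly)
      then have h2: "(\<lambda>n. inner p ((1 / \<tau>) *\<^sub>R (zs n - ys n))) \<longlonglongrightarrow> inner p ((1 / \<tau>) *\<^sub>R (z - y))"
        by (rule tendsto_inner[OF tendsto_const])
      have t1: "(\<lambda>n. inner p ((1 / \<tau>) *\<^sub>R (zs n - ys n)) - H (ys n, p)) \<longlonglongrightarrow> inner p ((1 / \<tau>) *\<^sub>R (z - y)) - H (y, p)"
        by (rule tendsto_diff[OF h2 h1])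
      have u1: "(\<lambda>n. u (zs n)) \<longlonglongrightarrow> u z" by (rule isCont_tendsto_compose[OF cu lz])
      have u2: "(\<lambda>n. u (ys n)) \<longlonglongrightarrow> u y" by (rule isCont_tendsto_compose[OF cu ly])
      have t2: "(\<lambda>n. (u (zs n) - u (ys n) + \<tau> * c) / \<tau>) \<longlonglongrightarrow> E / \<tau>"
        unfolding E_def by (intro tendsto_divide tendsto_add tendsto_diff u1 u2 tendsto_const) (use assms(2) in simp)
      show "inner p ((1 / \<tau>) *\<^sub>R (z - y)) - H (y, p) \<le> E / \<tau>"
        by (rule LIMSEQ_le[OF t1 t2]) (use le in blast)
    qed auto
    then have "Ltau ?L \<tau> y z \<le> E" unfolding Ltau_def using assms(2) by (simp add: field_simps)
    then show ?thesis using LOineq[of z y] unfolding S_def E_def by linarith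
  qed
  have ex: "\<exists>ys. ys (Suc n) = x \<and> ys n = x + \<tau> *\<^sub>R v \<and> (\<forall>k. S (ys (Suc k)) (ys k))" for n
  proof -
    from assms(6) have "(x, v) \<in> Psi_tau_set ?L \<tau> c u n (Sigma_tau ?L \<tau> c u)"
      unfolding discrete_Aubry_def by blast
    then obtain z where "(x, v) \<in> Psi_tau ?L \<tau> c u n z" unfolding Psi_tau_set_def by blast
    then obtain xs where xs: "x = xs (Suc n)" "v = (1 / \<tau>) *\<^sub>R (xs n - xs (Suc n))"
      "calibrated ?L \<tau> c u (fst z + \<tau> *\<^sub>R snd z) xs"
      unfolding Psi_tau_def by blast
    have "xs n = x + \<tau> *\<^sub>R v" using xs(1,2) assms(2) by simp
    moreover have "\<forall>k. S (xs (Suc k)) (xs k)" using xs(3) unfolding calibrated_def S_def by simp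
    ultimately show ?thesis using xs(1) by metis
  qed
  have "\<exists>ys. \<forall>n. ys n (Suc n) = x \<and> ys n n = x + \<tau> *\<^sub>R v \<and> (\<forall>k. S (ys n (Suc k)) (ys n k))"
    by (rule choice) (use ex in blast)
  then obtain ys where ys0: "\<forall>n. ys n (Suc n) = x \<and> ys n n = x + \<tau> *\<^sub>R v \<and> (\<forall>k. S (ys n (Suc k)) (ys n k))"
    by blast
  have ys: "\<And>n. ys n (Suc n) = x" "\<And>n. ys n n = x + \<tau> *\<^sub>R v"
    "\<And>n k. S (ys n (Suc k)) (ys n k)" using ys0 by auto
  define w where "w = (\<lambda>n j. ys n (Suc n - min j (Suc n)))"
  have wS: "S (w n j) (w n (Suc j))" if "j \<le> n" for n j
  proof -
    have "Suc n - j = Suc (n - j)" using that by auto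
    then have "w n j = ys n (Suc (n - j))" "w n (Suc j) = ys n (n - j)" unfolding w_def using that by (simp_all add: min_def)
    then show ?thesis using ys(3) by simp
  qed
  have wd: "dist (w n j) (w n (Suc j)) \<le> R" for n j
  proof (cases "j \<le> n")
    case True then show ?thesis using wS stepb by blast
  next
    case False then have "w n j = w n (Suc j)" unfolding w_def by simp
    then show ?thesis using R0 by simp
  qed
  have wb: "dist x (w n j) \<le> real j * R" for n j
  proof (induction j)
    case 0 then show ?case using ys(1) by (simp add: w_def)
  next
    case (Suc j)
    have "dist x (w n (Suc j)) \<le> dist x (w n j) + dist (w n j) (w n (Suc j))" by (rule dist_triangle)
    then show ?case using Suc wd[of n j] by (simp add: algebra_simps)
  qed
  define K where "K = PiE UNIV (\<lambda>j::nat. cball x (real j * R))"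
  have "\<forall>i\<in>UNIV. compactin euclidean (cball x (real i * R))" by simp
  then have "compactin (product_topology (\<lambda>j. euclidean) UNIV) K"
    unfolding K_def by (simp only: compactin_PiE) blast
  then have cK: "compact K" by (simp only: euclidean_product_topology compactin_euclidean_iff)
  have wK: "\<forall>n. w n \<in> K" by (simp only: K_def PiE_UNIV_domain Pi_iff mem_cball) (use wb in blast)
  from seq_compactE[OF compact_imp_seq_compact[OF cK] wK] obtain l r
    where lr: "l \<in> K" "strict_mono r" "(w \<circ> r) \<longlonglongrightarrow> l" by blast
  have coord: "(\<lambda>n. w (r n) j) \<longlonglongrightarrow> l j" for j
  proof -
    have "continuous_on UNIV (\<lambda>f::nat \<Rightarrow> real ^ 'd. f j)" by (rule continuous_on_product_coordinates)
    then have "isCont (\<lambda>f. f j) (l::nat \<Rightarrow> real ^ 'd)"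
      using continuous_on_eq_continuous_at[OF open_UNIV] by blast
    from isCont_tendsto_compose[OF this lr(3)] show ?thesis by (simp add: o_def)
  qed
  have l0: "l 0 = x"
  proof -
    have "(\<lambda>n. w (r n) 0) = (\<lambda>n. x)" using ys(1) by (simp add: w_def)
    then show ?thesis using coord[of 0] LIMSEQ_unique tendsto_const by metis
  qed
  have l1: "l 1 = x + \<tau> *\<^sub>R v"
  proof -
    have "(\<lambda>n. w (r n) 1) = (\<lambda>n. x + \<tau> *\<^sub>R v)" using ys(2) by (simp add: w_def)
    then show ?thesis using coord[of 1] LIMSEQ_unique tendsto_const by metis
  qed
  have lS: "S (l j) (l (Suc j))" for j
  proof (rule closedS)
    show "(\<lambda>n. w (r (n + j)) j) \<longlonglongrightarrow> l j"
      using LIMSEQ_ignore_initial_segment[OF coord[of j], of j] by simp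
    show "(\<lambda>n. w (r (n + j)) (Suc j)) \<longlonglongrightarrow> l (Suc j)"
      using LIMSEQ_ignore_initial_segment[OF coord[of "Suc j"], of j] by simp
    fix n
    have "j \<le> r (n + j)" using seq_suble[OF lr(2), of "n + j"] by simp
    then show "S (w (r (n + j)) j) (w (r (n + j)) (Suc j))" by (rule wS)
  qed
  define X where "X = (\<lambda>k::int. if k \<ge> 0 then l (nat k) else ys 0 (nat (1 - k)))"
  have XS: "S (X k) (X (k + 1))" for k
  proof (cases "k \<ge> 0")
    case True
    then have "nat (k + 1) = Suc (nat k)" by simp
    then show ?thesis using True lS unfolding X_def by simp
  next
    case False
    have "nat (1 - k) = Suc (nat (- k))" using False by simp
    then have a: "X k = ys 0 (Suc (nat (- k)))" using False unfolding X_def by simp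
    have "X (k + 1) = ys 0 (nat (- k))"
    proof (cases "k = -1")
      case True then show ?thesis using l0 ys(1)[of 0] unfolding X_def by simp
    next
      case False2: False
      then have "\<not> k + 1 \<ge> 0" "nat (1 - (k + 1)) = nat (- k)" using False by auto
      then show ?thesis unfolding X_def by simp
    qed
    then show ?thesis using a ys(3) by simp
  qed
  have X0: "X 0 = x" using l0 by (simp add: X_def)
  have X1: "X 1 = x + \<tau> *\<^sub>R v" using l1 by (simp add: X_def)
  have tel: "u (X n) - u (X m) = (\<Sum>j\<in>{m..<n}. Ltau ?L \<tau> (X j) (X (j + 1))) - real_of_int (n - m) * \<tau> * c"
    if "m < n" for m n
    by (rule telescope[where u=u and X=X]) (use XS that in \<open>auto simp: S_def\<close>)
  show ?thesis using X0 X1 tel by blast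
qed

end
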